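(* Let $d\ge 2$ and $E,F\subset\mathbb F_q^d$. Then $$\sum_{t\in\mathbb F_q}\nu^2(t)\leq q^{-1}|E|^2|F|^2+q^{2d}|F|\,\mathfrak M(E),$$ and $$\sum_{t\in\mathbb F_q}\nu^2(t)\leq q^{-1}|E|^2|F|^2+q^{3d}\Big|\sum_{m\in S_0}\overline{\widehat E(m)}\widehat F(m)\Big|^2+q^{2d}|F|\,\mathfrak M^*(E).$$
   Context: $\mathbb F_q$ is a finite field of characteristic greater than two, $\mathbb F_q^*=\mathbb F_q\setminus\{0\}$, and $\chi$ is a fixed nontrivial additive character of $\mathbb F_q$. For $f:\mathbb F_q^d\to\mathbb C$, $\widehat f(m)=q^{-d}\sum_{x\in\mathbb F_q^d}\chi(-m\cdot x)f(x)$; sets are identified with their indicator functions. For $m\in\mathbb F_q^d$, $\|m\|=m_1^2+\dots+m_d^2$; $S_r=\{x\in\mathbb F_q^d:\|x\|=r\}$. $\nu(t)=|\{(x,y)\in E\times F:\|x-y\|=t\}|$. $\mathfrak M(E)=\max_{r\in\mathbb F_q}\sum_{m\in S_r}|\widehat E(m)|^2$ and $\mathfrak M^*(E)=\max_{r\in\mathbb F_q^*}\sum_{m\in S_r}|\widehat E(m)|^2$. *)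

theory Defs
  imports "HOL-Analysis.Analysis"
begin

text \<open>Vectors in F_q^d are modelled as 'a ^ 'n with 'a a finite field and CARD('n) = d.\<close>

definition dotp :: "'a::comm_ring_1 ^ 'n \<Rightarrow> 'a ^ 'n \<Rightarrow> 'a" where
  "dotp m x = (\<Sum>i\<in>UNIV. m $ i * x $ i)"

definition qnorm :: "'a::comm_ring_1 ^ 'n \<Rightarrow> 'a" where
  "qnorm m = (\<Sum>i\<in>UNIV. (m $ i)^2)"

definition sphere_F :: "'a::comm_ring_1 \<Rightarrow> ('a ^ 'n) set" where
  "sphere_F r = {x. qnorm x = r}"

definition add_char :: "('a::field \<Rightarrow> complex) \<Rightarrow> bool" where
  "add_char \<psi> \<longleftrightarrow> (\<forall>x y. \<psi> (x + y) = \<psi> x * \<psi> y) \<and> (\<forall>x. \<psi> x \<noteq> 0)"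

definition nontrivial_add_char :: "('a::field \<Rightarrow> complex) \<Rightarrow> bool" where
  "nontrivial_add_char \<psi> \<longleftrightarrow> add_char \<psi> \<and> (\<exists>x. \<psi> x \<noteq> 1)"

definition fourier :: "('a::{field,finite} \<Rightarrow> complex) \<Rightarrow> ('a ^ 'n \<Rightarrow> complex) \<Rightarrow> 'a ^ 'n \<Rightarrow> complex" where
  "fourier \<psi> f m = (1 / of_nat (CARD('a) ^ CARD('n))) * (\<Sum>x\<in>UNIV. \<psi> (- dotp m x) * f x)"

definition indic :: "'b set \<Rightarrow> 'b \<Rightarrow> complex" where
  "indic E x = (if x \<in> E then 1 else 0)"

definition nu :: "('a::comm_ring_1 ^ 'n) set \<Rightarrow> ('a ^ 'n) set \<Rightarrow> 'a \<Rightarrow> nat" where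
  "nu E F t = card {(x, y). x \<in> E \<and> y \<in> F \<and> qnorm (x - y) = t}"

definition frakM :: "('a::{field,finite} \<Rightarrow> complex) \<Rightarrow> ('a ^ 'n) set \<Rightarrow> real" where
  "frakM \<psi> E = Max ((\<lambda>r. \<Sum>m\<in>sphere_F r. (cmod (fourier \<psi> (indic E) m))^2) ` UNIV)"

definition frakM_star :: "('a::{field,finite} \<Rightarrow> complex) \<Rightarrow> ('a ^ 'n) set \<Rightarrow> real" where
  "frakM_star \<psi> E = Max ((\<lambda>r. \<Sum>m\<in>sphere_F r. (cmod (fourier \<psi> (indic E) m))^2) ` (UNIV - {0}))"

end

theory Submission
  imports Defs
begin

lemma chr0: assumes "add_char \<psi>" shows "\<psi> 0 = 1"
proof -
  have "\<psi> 0 = \<psi> 0 * \<psi> 0" using assms unfolding add_char_def by (metis add_0)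
  moreover have "\<psi> 0 \<noteq> 0" using assms unfolding add_char_def by auto
  ultimately show ?thesis by (metis mult_cancel_left1)
qed

lemma chr_add: assumes "add_char \<psi>" shows "\<psi> (x + y) = \<psi> x * \<psi> y"
  using assms unfolding add_char_def by auto

lemma chr_neg: assumes "add_char \<psi>" shows "\<psi> (- x) * \<psi> x = 1"
  using chr_add[OF assms, of "-x" x] chr0[OF assms] by simp

lemma chr_pow: assumes "add_char \<psi>" shows "\<psi> (of_nat n * x) = \<psi> x ^ n"
  by (induction n) (auto simp: chr0[OF assms] chr_add[OF assms] distrib_right)

lemma chr_norm: fixes \<psi> :: "'a::{field,finite} \<Rightarrow> complex"
  assumes "add_char \<psi>" shows "cmod (\<psi> x) = 1"
proof -
  have p: "CHAR('a) > 0" by (rule finite_imp_CHAR_pos) simp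
  have "\<psi> x ^ CHAR('a) = 1" using chr_pow[OF assms, of "CHAR('a)" x] chr0[OF assms] by simp
  hence "cmod (\<psi> x) ^ CHAR('a) = 1" by (metis norm_one norm_power)
  thus ?thesis using p by (metis norm_ge_zero power_eq_imp_eq_base power_one zero_le_one)
qed

lemma chr_cnj: fixes \<psi> :: "'a::{field,finite} \<Rightarrow> complex"
  assumes "add_char \<psi>" shows "cnj (\<psi> x) = \<psi> (- x)"
proof -
  have "cnj (\<psi> x) * \<psi> x = 1" using chr_norm[OF assms, of x]
    by (metis complex_norm_square mult.commute of_real_1 power_one)
  thus ?thesis using chr_neg[OF assms, of x] chr_norm[OF assms, of x]
    by (metis mult_cancel_right norm_zero zero_neq_one)
qed

lemma chr_diff: assumes "add_char \<psi>" shows "\<psi> (x - y) = \<psi> x * \<psi> (- y)"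
  using chr_add[OF assms, of x "-y"] by simp

lemma shift_sum: fixes f :: "'b::{ab_group_add,finite} \<Rightarrow> 'c::comm_monoid_add"
  shows "(\<Sum>x\<in>UNIV. f (x + a)) = (\<Sum>x\<in>UNIV. f x)"
  by (rule sum.reindex_bij_witness[of _ "\<lambda>x. x - a" "\<lambda>x. x + a"]) auto

lemma orth1: fixes \<psi> :: "'a::{field,finite} \<Rightarrow> complex"
  assumes "nontrivial_add_char \<psi>"
  shows "(\<Sum>u\<in>UNIV. \<psi> (u * c)) = (if c = 0 then of_nat CARD('a) else 0)"
proof (cases "c = 0")
  case True
  have "\<psi> 0 = 1" using assms chr0 unfolding nontrivial_add_char_def by blast
  thus ?thesis using True by simp
next
  case False
  have ac: "add_char \<psi>" using assms unfolding nontrivial_add_char_def by auto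
  obtain w where w: "\<psi> w \<noteq> 1" using assms unfolding nontrivial_add_char_def by auto
  let ?S = "\<Sum>u\<in>UNIV. \<psi> (u * c)"
  have "?S = (\<Sum>u\<in>UNIV. \<psi> ((u + w / c) * c))" by (rule shift_sum[symmetric])
  also have "\<dots> = (\<Sum>u\<in>UNIV. \<psi> w * \<psi> (u * c))"
  proof (intro sum.cong refl)
    fix u
    have "(u + w / c) * c = w + u * c" using False by (simp add: field_simps)
    thus "\<psi> ((u + w / c) * c) = \<psi> w * \<psi> (u * c)" by (simp add: chr_add[OF ac])
  qed
  also have "\<dots> = \<psi> w * ?S" by (simp add: sum_distrib_left)
  finally have "(1 - \<psi> w) * ?S = 0" by (simp add: algebra_simps)
  thus ?thesis using w False by simp
qed

lemma dotp_add: "dotp (m + a) v = dotp m v + dotp a v"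
  unfolding dotp_def by (simp add: distrib_right sum.distrib)

lemma dotp_comm: "dotp m v = dotp v m"
  unfolding dotp_def by (simp add: mult.commute)

lemma dotp_diff2: "dotp m (v - w) = dotp m v - dotp m w"
  unfolding dotp_def by (simp add: right_diff_distrib sum_subtractf)

lemma orthN: fixes \<psi> :: "'a::{field,finite} \<Rightarrow> complex" and v :: "'a^'n"
  assumes "nontrivial_add_char \<psi>"
  shows "(\<Sum>m\<in>UNIV. \<psi> (dotp m v)) = (if v = 0 then of_nat (CARD('a)^CARD('n)) else 0)"
proof (cases "v = 0")
  case True
  have "\<psi> 0 = 1" using assms chr0 unfolding nontrivial_add_char_def by blast
  thus ?thesis using True by (simp add: dotp_def)
next
  case False
  have ac: "add_char \<psi>" using assms unfolding nontrivial_add_char_def by auto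
  obtain w where w: "\<psi> w \<noteq> 1" using assms unfolding nontrivial_add_char_def by auto
  obtain i where i: "v $ i \<noteq> 0" using False by (metis vec_eq_iff zero_index)
  define a :: "'a^'n" where "a = (\<chi> j. if j = i then w / v $ i else 0)"
  have da: "dotp a v = w" unfolding dotp_def a_def using i
  proof -
    have "(\<Sum>j\<in>UNIV. (if j = i then w / v $ i else 0) * v $ j) = (\<Sum>j\<in>UNIV. if j = i then w / v $ i * v $ j else 0)"
      by (intro sum.cong) auto
    also have "\<dots> = w" using i by simp
    finally show "(\<Sum>j\<in>UNIV. (\<chi> j. if j = i then w / v $ i else 0) $ j * v $ j) = w" by simp
  qed
  let ?S = "\<Sum>m\<in>UNIV. \<psi> (dotp m v)"
  have "?S = (\<Sum>m\<in>UNIV. \<psi> (dotp (m + a) v))" by (rule shift_sum[symmetric])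
  also have "\<dots> = (\<Sum>m\<in>UNIV. \<psi> w * \<psi> (dotp m v))"
    by (intro sum.cong) (auto simp: dotp_add da chr_add[OF ac] mult.commute)
  also have "\<dots> = \<psi> w * ?S" by (simp add: sum_distrib_left)
  finally have "(1 - \<psi> w) * ?S = 0" by (simp add: algebra_simps)
  thus ?thesis using w False by simp
qed

lemma two_ne0: assumes "CHAR('a::{field,finite}) > 2" shows "(2::'a) \<noteq> 0"
proof
  assume "(2::'a) = 0"
  hence "of_nat 2 = (0::'a)" by simp
  hence "CHAR('a) dvd 2" by (simp only: of_nat_eq_0_iff_char_dvd)
  thus False using assms by (auto dest: dvd_imp_le)
qed

lemma qnorm_shift: "b * qnorm (h + w) = b * qnorm w + (b * qnorm h + dotp w ((2 * b) *s h))"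
  unfolding qnorm_def dotp_def
  by (simp add: sum_distrib_left sum.distrib[symmetric] power2_eq_square algebra_simps)

lemma qnorm_0: "qnorm (0::'a::comm_ring_1^'n) = 0" unfolding qnorm_def by simp

definition K :: "('a::{field,finite} \<Rightarrow> complex) \<Rightarrow> 'a \<Rightarrow> ('a^'n) itself \<Rightarrow> complex" where
  "K \<psi> b _ = (\<Sum>m\<in>(UNIV::('a^'n) set). \<psi> (b * qnorm m))"

lemma gauss_norm: fixes \<psi> :: "'a::{field,finite} \<Rightarrow> complex"
  assumes nt: "nontrivial_add_char \<psi>" and two: "(2::'a) \<noteq> 0" and b: "b \<noteq> 0"
  shows "(cmod (\<Sum>m\<in>(UNIV::('a^'n) set). \<psi> (b * qnorm m)))^2 = real (CARD('a)^CARD('n))"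
proof -
  have ac: "add_char \<psi>" using nt unfolding nontrivial_add_char_def by auto
  let ?K = "\<Sum>m\<in>(UNIV::('a^'n) set). \<psi> (b * qnorm m)"
  have "?K * cnj ?K = (\<Sum>w\<in>(UNIV::('a^'n) set). \<Sum>z\<in>(UNIV::('a^'n) set). \<psi> (b * qnorm z) * \<psi> (- (b * qnorm w)))"
    by (simp add: sum_distrib_left sum_distrib_right chr_cnj[OF ac] mult.commute)
  also have "\<dots> = (\<Sum>w\<in>(UNIV::('a^'n) set). \<Sum>h\<in>(UNIV::('a^'n) set). \<psi> (b * qnorm (h + w)) * \<psi> (- (b * qnorm w)))"
    by (intro sum.cong refl shift_sum[symmetric])
  also have "\<dots> = (\<Sum>w\<in>(UNIV::('a^'n) set). \<Sum>h\<in>(UNIV::('a^'n) set). \<psi> (b * qnorm h) * \<psi> (dotp w ((2 * b) *s h)))"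
  proof (intro sum.cong refl)
    fix w h :: "'a^'n"
    have "\<psi> (b * qnorm (h + w)) * \<psi> (- (b * qnorm w)) = \<psi> (b * qnorm (h + w) + - (b * qnorm w))"
      by (rule chr_add[OF ac, symmetric])
    also have "b * qnorm (h + w) + - (b * qnorm w) = b * qnorm h + dotp w ((2 * b) *s h)"
      by (simp add: qnorm_shift)
    finally show "\<psi> (b * qnorm (h + w)) * \<psi> (- (b * qnorm w)) = \<psi> (b * qnorm h) * \<psi> (dotp w ((2 * b) *s h))"
      by (simp add: chr_add[OF ac])
  qed
  also have "\<dots> = (\<Sum>h\<in>(UNIV::('a^'n) set). \<psi> (b * qnorm h) * (\<Sum>w\<in>UNIV. \<psi> (dotp w ((2 * b) *s h))))"
    by (subst sum.swap) (simp add: sum_distrib_left)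
  also have "\<dots> = (\<Sum>h\<in>(UNIV::('a^'n) set). if h = 0 then of_nat (CARD('a)^CARD('n)) else 0)"
  proof (intro sum.cong refl)
    fix h :: "'a^'n"
    have e: "((2 * b) *s h = 0) = (h = 0)" using two b
      by (auto simp: vec_eq_iff)
    show "\<psi> (b * qnorm h) * (\<Sum>w\<in>UNIV. \<psi> (dotp w ((2 * b) *s h))) = (if h = 0 then of_nat (CARD('a)^CARD('n)) else 0)"
      using orthN[OF nt, of "(2 * b) *s h"] e chr0[OF ac] by (simp add: qnorm_0)
  qed
  also have "\<dots> = of_nat (CARD('a)^CARD('n))" by simp
  finally have "?K * cnj ?K = of_nat (CARD('a)^CARD('n))" .
  moreover have "complex_of_real ((cmod ?K)^2) = ?K * cnj ?K"
    by (rule complex_norm_square)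
  ultimately have "complex_of_real ((cmod ?K)^2) = of_real (real (CARD('a)^CARD('n)))"
    by simp
  thus ?thesis by (simp only: of_real_eq_iff)
qed

lemma sq_aux: fixes b :: "'a::field" assumes "(2::'a) \<noteq> 0" "b \<noteq> 0"
  shows "b*(x + - (y/(2*b)))^2 + (x + - (y/(2*b)))*y = b*x^2 + - (y^2) / (2*(2*b))"
proof -
  define c where "c = y/(2*b)"
  have y: "y = 2*b*c" using assms unfolding c_def by simp
  have "b*(x + - c)^2 + (x + - c)*(2*b*c) = b*x^2 + - (b*c^2)" by (simp add: algebra_simps power2_eq_square)
  moreover have "(2*b*c)^2 / (2*(2*b)) = b*c^2"
  proof -
    have nz: "2*(2*b) \<noteq> 0" using assms by (simp only: mult_eq_0_iff) simp
    have e: "(2*b*c)^2 = (2*(2*b)) * (b*c^2)" by (simp add: algebra_simps power2_eq_square)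
    show ?thesis by (subst e) (rule nonzero_mult_div_cancel_left[OF nz])
  qed
  ultimately show ?thesis unfolding c_def[symmetric] using y by (metis minus_divide_left)
qed

lemma complete_square: fixes \<psi> :: "'a::{field,finite} \<Rightarrow> complex"
  assumes ac: "add_char \<psi>" and two: "(2::'a) \<noteq> 0" and b: "b \<noteq> 0"
  shows "(\<Sum>m\<in>(UNIV::('a^'n) set). \<psi> (b * qnorm m + dotp m v))
       = \<psi> (- qnorm v / (4 * b)) * (\<Sum>m\<in>(UNIV::('a^'n) set). \<psi> (b * qnorm m))"
proof -
  define a :: "'a^'n" where "a = (- 1 / (2 * b)) *s v"
  have key: "b * qnorm (z + a) + dotp (z + a) v = b * qnorm z + - qnorm v / (4 * b)" for z
  proof -
    have "b * qnorm (z + a) + dotp (z + a) v = (\<Sum>i\<in>UNIV. b * (z $ i + a $ i)^2 + (z $ i + a $ i) * v $ i)"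
      unfolding qnorm_def dotp_def by (simp add: sum_distrib_left sum.distrib)
    also have "\<dots> = (\<Sum>i\<in>UNIV. b * (z $ i)^2 + - ((v $ i)^2) / (4 * b))"
    proof (intro sum.cong refl)
      fix i
      show "b * (z $ i + a $ i)^2 + (z $ i + a $ i) * v $ i = b * (z $ i)^2 + - ((v $ i)^2) / (4 * b)"
      proof -
        have f4: "(4::'a) \<noteq> 0" using two by (metis mult_2 mult_eq_0_iff numeral_Bit0 numeral_times_numeral one_add_one)
        have "a $ i = - (v $ i / (2 * b))" unfolding a_def by simp
        moreover have "(4::'a) * b = 2 * (2 * b)" by simp
        ultimately show ?thesis using sq_aux[OF two b, of "z $ i" "v $ i"] by simp
      qed
    qed
    also have "\<dots> = b * qnorm z + - qnorm v / (4 * b)"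
      unfolding qnorm_def by (simp add: sum_distrib_left sum_subtractf sum_divide_distrib)
    finally show ?thesis .
  qed
  have "(\<Sum>m\<in>(UNIV::('a^'n) set). \<psi> (b * qnorm m + dotp m v)) = (\<Sum>z\<in>(UNIV::('a^'n) set). \<psi> (b * qnorm (z + a) + dotp (z + a) v))"
    by (rule shift_sum[symmetric])
  also have "\<dots> = (\<Sum>z\<in>(UNIV::('a^'n) set). \<psi> (- qnorm v / (4 * b)) * \<psi> (b * qnorm z))"
    by (intro sum.cong refl) (metis key chr_add[OF ac] mult.commute)
  finally show ?thesis by (simp add: sum_distrib_left)
qed

lemma sum_indic: fixes f :: "'b::finite \<Rightarrow> complex" shows "(\<Sum>x\<in>UNIV. f x * indic E x) = (\<Sum>x\<in>E. f x)"
proof -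
  have "(\<Sum>x\<in>UNIV. f x * indic E x) = (\<Sum>x\<in>UNIV. if x \<in> E then f x else 0)"
    unfolding indic_def by (intro sum.cong) auto
  also have "\<dots> = sum f {x \<in> UNIV. x \<in> E}" by (rule sum.inter_filter[symmetric]) simp
  finally show ?thesis by simp
qed

lemma fourier_indic: fixes \<psi> :: "'a::{field,finite} \<Rightarrow> complex" and m :: "'a^'n"
  shows "fourier \<psi> (indic E) m = (1 / of_nat (CARD('a)^CARD('n))) * (\<Sum>x\<in>E. \<psi> (- dotp m x))"
  unfolding fourier_def by (simp add: sum_indic)

lemma fourier_cnj: fixes \<psi> :: "'a::{field,finite} \<Rightarrow> complex" and m :: "'a^'n"
  assumes ac: "add_char \<psi>"
  shows "cnj (fourier \<psi> (indic E) m) = (1 / of_nat (CARD('a)^CARD('n))) * (\<Sum>x\<in>E. \<psi> (dotp m x))"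
  unfolding fourier_indic by (simp add: chr_cnj[OF ac])

lemma qnorm_swap: "qnorm (y - x) = qnorm (x - y)"
  unfolding qnorm_def by (intro sum.cong refl) (simp add: power2_commute)

definition TT :: "('a::{field,finite} \<Rightarrow> complex) \<Rightarrow> ('a^'n) set \<Rightarrow> ('a^'n) set \<Rightarrow> 'a \<Rightarrow> complex" where
  "TT \<psi> E F s = (\<Sum>x\<in>E. \<Sum>y\<in>F. \<psi> (s * qnorm (x - y)))"

lemma key6: fixes \<psi> :: "'a::{field,finite} \<Rightarrow> complex" and E F :: "('a^'n) set"
  assumes ac: "add_char \<psi>" and two: "(2::'a) \<noteq> 0" and b: "b \<noteq> 0"
  shows "(\<Sum>m\<in>UNIV. fourier \<psi> (indic E) m * cnj (fourier \<psi> (indic F) m) * \<psi> (b * qnorm m))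
     = (1 / of_nat (CARD('a)^CARD('n)))^2 * (\<Sum>m\<in>(UNIV::('a^'n) set). \<psi> (b * qnorm m)) * TT \<psi> E F (- 1 / (4 * b))"
proof -
  let ?c = "1 / (of_nat (CARD('a)^CARD('n)) :: complex)"
  let ?K = "\<Sum>m\<in>(UNIV::('a^'n) set). \<psi> (b * qnorm m)"
  have "(\<Sum>m\<in>UNIV. fourier \<psi> (indic E) m * cnj (fourier \<psi> (indic F) m) * \<psi> (b * qnorm m))
     = (\<Sum>m\<in>UNIV. ?c^2 * (\<Sum>x\<in>E. \<Sum>y\<in>F. \<psi> (- dotp m x) * \<psi> (dotp m y) * \<psi> (b * qnorm m)))"
  proof (intro sum.cong refl)
    fix m :: "'a^'n"
    have "fourier \<psi> (indic E) m * cnj (fourier \<psi> (indic F) m) * \<psi> (b * qnorm m)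
      = ?c * (\<Sum>x\<in>E. \<psi> (- dotp m x)) * (?c * (\<Sum>y\<in>F. \<psi> (dotp m y))) * \<psi> (b * qnorm m)"
      unfolding fourier_cnj[OF ac] by (simp only: fourier_indic)
    also have "\<dots> = ?c^2 * ((\<Sum>x\<in>E. \<psi> (- dotp m x)) * (\<Sum>y\<in>F. \<psi> (dotp m y)) * \<psi> (b * qnorm m))"
      by (simp add: power2_eq_square)
    also have "(\<Sum>x\<in>E. \<psi> (- dotp m x)) * (\<Sum>y\<in>F. \<psi> (dotp m y)) * \<psi> (b * qnorm m)
       = (\<Sum>x\<in>E. \<Sum>y\<in>F. \<psi> (- dotp m x) * \<psi> (dotp m y) * \<psi> (b * qnorm m))"
      by (simp add: sum_distrib_left sum_distrib_right) (rule sum.swap)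
    finally show "fourier \<psi> (indic E) m * cnj (fourier \<psi> (indic F) m) * \<psi> (b * qnorm m)
      = ?c^2 * (\<Sum>x\<in>E. \<Sum>y\<in>F. \<psi> (- dotp m x) * \<psi> (dotp m y) * \<psi> (b * qnorm m))" .
  qed
  also have "\<dots> = ?c^2 * (\<Sum>x\<in>E. \<Sum>y\<in>F. \<Sum>m\<in>UNIV. \<psi> (b * qnorm m + dotp m (y - x)))"
  proof -
    have "\<psi> (- dotp m x) * \<psi> (dotp m y) * \<psi> (b * qnorm m) = \<psi> (b * qnorm m + dotp m (y - x))" for m x y :: "'a^'n"
    proof -
      have "dotp m (y - x) = dotp m y + - dotp m x" by (simp add: dotp_diff2)
      thus ?thesis by (simp only: chr_add[OF ac] mult_ac)
    qed
    hence "(\<Sum>m\<in>UNIV. ?c^2 * (\<Sum>x\<in>E. \<Sum>y\<in>F. \<psi> (- dotp m x) * \<psi> (dotp m y) * \<psi> (b * qnorm m)))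
        = ?c^2 * (\<Sum>m\<in>UNIV. \<Sum>x\<in>E. \<Sum>y\<in>F. \<psi> (b * qnorm m + dotp m (y - x)))"
      by (simp add: sum_distrib_left)
    also have "\<dots> = ?c^2 * (\<Sum>x\<in>E. \<Sum>y\<in>F. \<Sum>m\<in>UNIV. \<psi> (b * qnorm m + dotp m (y - x)))"
      by (subst sum.swap) (subst (2) sum.swap, simp)
    finally show ?thesis .
  qed
  also have "\<dots> = ?c^2 * (\<Sum>x\<in>E. \<Sum>y\<in>F. \<psi> ((- 1 / (4 * b)) * qnorm (x - y)) * ?K)"
  proof -
    have "(\<Sum>m\<in>UNIV. \<psi> (b * qnorm m + dotp m (y - x))) = \<psi> ((- 1 / (4 * b)) * qnorm (x - y)) * ?K" for x y :: "'a^'n"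
      using complete_square[OF ac two b, of "y - x"] by (simp add: qnorm_swap)
    thus ?thesis by simp
  qed
  also have "\<dots> = ?c^2 * ?K * TT \<psi> E F (- 1 / (4 * b))"
    unfolding TT_def by (simp only: sum_distrib_right[symmetric]) (simp only: mult_ac)
  finally show ?thesis .
qed

lemma T_norm: fixes \<psi> :: "'a::{field,finite} \<Rightarrow> complex" and E F :: "('a^'n) set"
  assumes nt: "nontrivial_add_char \<psi>" and two: "(2::'a) \<noteq> 0" and b: "b \<noteq> 0"
  shows "(cmod (TT \<psi> E F (- 1 / (4 * b))))^2 = real (CARD('a)^CARD('n))^3 *
     (cmod (\<Sum>m\<in>UNIV. fourier \<psi> (indic E) m * cnj (fourier \<psi> (indic F) m) * \<psi> (b * qnorm m)))^2"
proof -
  have ac: "add_char \<psi>" using nt unfolding nontrivial_add_char_def by auto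
  define R where "R = real (CARD('a)^CARD('n))"
  have R: "R > 0" unfolding R_def by simp
  let ?K = "\<Sum>m\<in>(UNIV::('a^'n) set). \<psi> (b * qnorm m)"
  let ?T = "TT \<psi> E F (- 1 / (4 * b))"
  have K: "(cmod ?K)^2 = R" unfolding R_def by (rule gauss_norm[OF nt two b])
  have c: "cmod (1 / (of_nat (CARD('a)^CARD('n)) :: complex)) = 1 / R"
    unfolding R_def by (simp add: norm_divide norm_power)
  have "(cmod (\<Sum>m\<in>UNIV. fourier \<psi> (indic E) m * cnj (fourier \<psi> (indic F) m) * \<psi> (b * qnorm m)))^2
      = ((1/R)^2 * cmod ?K * cmod ?T)^2"
    unfolding key6[OF ac two b] norm_mult norm_power c by simp
  also have "\<dots> = (1/R)^4 * (cmod ?K)^2 * (cmod ?T)^2" by (simp add: power_mult_distrib power4_eq_xxxx power2_eq_square mult_ac)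
  also have "\<dots> = (cmod ?T)^2 / R^3" unfolding K using R by (simp add: field_simps power2_eq_square power4_eq_xxxx power3_eq_cube)
  finally show ?thesis unfolding R_def[symmetric] using R by (simp add: field_simps)
qed

lemma group_r: fixes g :: "'a::{field,finite}^'n \<Rightarrow> complex"
  shows "(\<Sum>m\<in>UNIV. g m * \<psi> (b * qnorm m)) = (\<Sum>r\<in>UNIV. \<psi> (b * r) * (\<Sum>m\<in>sphere_F r. g m))"
proof -
  have "(\<Sum>m\<in>UNIV. g m * \<psi> (b * qnorm m)) = (\<Sum>r\<in>UNIV. \<Sum>m\<in>{m\<in>UNIV. qnorm m = r}. g m * \<psi> (b * qnorm m))"
    by (rule sum.group[symmetric]) auto
  also have "\<dots> = (\<Sum>r\<in>UNIV. \<psi> (b * r) * (\<Sum>m\<in>sphere_F r. g m))"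
    unfolding sphere_F_def sum_distrib_left by (intro sum.cong refl) (auto simp: mult.commute)
  finally show ?thesis .
qed

lemma L8: fixes \<psi> :: "'a::{field,finite} \<Rightarrow> complex" and B :: "'a \<Rightarrow> complex"
  assumes nt: "nontrivial_add_char \<psi>"
  shows "(\<Sum>u\<in>UNIV. (cmod (\<Sum>r\<in>UNIV. \<psi> (u * r) * B r))^2) = real CARD('a) * (\<Sum>r\<in>UNIV. (cmod (B r))^2)"
proof -
  have ac: "add_char \<psi>" using nt unfolding nontrivial_add_char_def by auto
  have "complex_of_real (\<Sum>u\<in>UNIV. (cmod (\<Sum>r\<in>UNIV. \<psi> (u * r) * B r))^2)
     = (\<Sum>u\<in>UNIV. (\<Sum>r\<in>UNIV. \<psi> (u * r) * B r) * cnj (\<Sum>r\<in>UNIV. \<psi> (u * r) * B r))"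
    by (simp only: of_real_sum complex_norm_square)
  also have "\<dots> = (\<Sum>u\<in>UNIV. \<Sum>r\<in>UNIV. \<Sum>r'\<in>UNIV. B r * cnj (B r') * \<psi> (u * (r - r')))"
  proof (intro sum.cong refl)
    fix u :: 'a
    have "(\<Sum>r\<in>UNIV. \<psi> (u * r) * B r) * cnj (\<Sum>r\<in>UNIV. \<psi> (u * r) * B r)
       = (\<Sum>r\<in>UNIV. \<Sum>r'\<in>UNIV. (\<psi> (u * r) * B r) * (\<psi> (- (u * r')) * cnj (B r')))"
      by (simp add: sum_distrib_left sum_distrib_right chr_cnj[OF ac]) (rule sum.swap)
    also have "\<dots> = (\<Sum>r\<in>UNIV. \<Sum>r'\<in>UNIV. B r * cnj (B r') * \<psi> (u * (r - r')))"
    proof (intro sum.cong refl)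
      fix r r' :: 'a
      have "u * (r - r') = u * r + - (u * r')" by (simp add: algebra_simps)
      thus "(\<psi> (u * r) * B r) * (\<psi> (- (u * r')) * cnj (B r')) = B r * cnj (B r') * \<psi> (u * (r - r'))"
        by (simp only: chr_add[OF ac] mult_ac)
    qed
    finally show "(\<Sum>r\<in>UNIV. \<psi> (u * r) * B r) * cnj (\<Sum>r\<in>UNIV. \<psi> (u * r) * B r)
       = (\<Sum>r\<in>UNIV. \<Sum>r'\<in>UNIV. B r * cnj (B r') * \<psi> (u * (r - r')))" .
  qed
  also have "\<dots> = (\<Sum>r\<in>UNIV. \<Sum>r'\<in>UNIV. B r * cnj (B r') * (\<Sum>u\<in>UNIV. \<psi> (u * (r - r'))))"
  proof -
    have "(\<Sum>u\<in>UNIV. \<Sum>r\<in>UNIV. \<Sum>r'\<in>UNIV. B r * cnj (B r') * \<psi> (u * (r - r')))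
       = (\<Sum>r\<in>UNIV. \<Sum>u\<in>UNIV. \<Sum>r'\<in>UNIV. B r * cnj (B r') * \<psi> (u * (r - r')))"
      by (rule sum.swap)
    also have "\<dots> = (\<Sum>r\<in>UNIV. \<Sum>r'\<in>UNIV. \<Sum>u\<in>UNIV. B r * cnj (B r') * \<psi> (u * (r - r')))"
      by (intro sum.cong refl sum.swap)
    finally show ?thesis by (simp only: sum_distrib_left)
  qed
  also have "\<dots> = (\<Sum>r\<in>UNIV. B r * cnj (B r) * of_nat CARD('a))"
  proof (intro sum.cong refl)
    fix r :: 'a
    have "(\<Sum>r'\<in>UNIV. B r * cnj (B r') * (\<Sum>u\<in>UNIV. \<psi> (u * (r - r'))))
       = (\<Sum>r'\<in>UNIV. if r' = r then B r * cnj (B r) * of_nat CARD('a) else 0)"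
      by (intro sum.cong refl) (simp add: orth1[OF nt])
    thus "(\<Sum>r'\<in>UNIV. B r * cnj (B r') * (\<Sum>u\<in>UNIV. \<psi> (u * (r - r')))) = B r * cnj (B r) * of_nat CARD('a)"
      by simp
  qed
  also have "\<dots> = (\<Sum>r\<in>UNIV. complex_of_real (real CARD('a) * (cmod (B r))^2))"
    by (intro sum.cong refl) (simp only: complex_norm_square[symmetric] of_real_mult of_real_of_nat_eq mult.commute)
  also have "\<dots> = complex_of_real (real CARD('a) * (\<Sum>r\<in>UNIV. (cmod (B r))^2))"
    by (simp only: of_real_sum sum_distrib_left)
  finally show ?thesis by (simp only: of_real_eq_iff)
qed

lemma plancherel: fixes \<psi> :: "'a::{field,finite} \<Rightarrow> complex" and F :: "('a^'n) set"
  assumes nt: "nontrivial_add_char \<psi>"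
  shows "(\<Sum>m\<in>UNIV. (cmod (fourier \<psi> (indic F) m))^2) = real (card F) / real (CARD('a)^CARD('n))"
proof -
  have ac: "add_char \<psi>" using nt unfolding nontrivial_add_char_def by auto
  let ?c = "1 / (of_nat (CARD('a)^CARD('n)) :: complex)"
  have "complex_of_real (\<Sum>m\<in>UNIV. (cmod (fourier \<psi> (indic F) m))^2)
      = (\<Sum>m\<in>UNIV. fourier \<psi> (indic F) m * cnj (fourier \<psi> (indic F) m))"
    by (simp only: of_real_sum complex_norm_square)
  also have "\<dots> = (\<Sum>m\<in>UNIV. ?c^2 * (\<Sum>y\<in>F. \<Sum>y'\<in>F. \<psi> (dotp m (y' - y))))"
  proof (intro sum.cong refl)
    fix m :: "'a^'n"
    have "fourier \<psi> (indic F) m * cnj (fourier \<psi> (indic F) m)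
      = ?c * (\<Sum>y\<in>F. \<psi> (- dotp m y)) * (?c * (\<Sum>y'\<in>F. \<psi> (dotp m y')))"
      unfolding fourier_cnj[OF ac] by (simp only: fourier_indic)
    also have "\<dots> = ?c^2 * (\<Sum>y\<in>F. \<Sum>y'\<in>F. \<psi> (- dotp m y) * \<psi> (dotp m y'))"
      by (simp add: power2_eq_square sum_distrib_left sum_distrib_right sum_divide_distrib mult_ac)
    also have "\<dots> = ?c^2 * (\<Sum>y\<in>F. \<Sum>y'\<in>F. \<psi> (dotp m (y' - y)))"
    proof -
      have "\<psi> (- dotp m y) * \<psi> (dotp m y') = \<psi> (dotp m (y' - y))" for y y' :: "'a^'n"
      proof -
        have "dotp m (y' - y) = dotp m y' + - dotp m y" by (simp add: dotp_diff2)
        thus ?thesis by (simp only: chr_add[OF ac] mult_ac)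
      qed
      thus ?thesis by simp
    qed
    finally show "fourier \<psi> (indic F) m * cnj (fourier \<psi> (indic F) m) = ?c^2 * (\<Sum>y\<in>F. \<Sum>y'\<in>F. \<psi> (dotp m (y' - y)))" .
  qed
  also have "\<dots> = ?c^2 * (\<Sum>y\<in>F. \<Sum>y'\<in>F. \<Sum>m\<in>UNIV. \<psi> (dotp m (y' - y)))"
  proof -
    have "(\<Sum>m\<in>UNIV. \<Sum>y\<in>F. \<Sum>y'\<in>F. \<psi> (dotp m (y' - y))) = (\<Sum>y\<in>F. \<Sum>m\<in>UNIV. \<Sum>y'\<in>F. \<psi> (dotp m (y' - y)))"
      by (rule sum.swap)
    also have "\<dots> = (\<Sum>y\<in>F. \<Sum>y'\<in>F. \<Sum>m\<in>UNIV. \<psi> (dotp m (y' - y)))"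
      by (intro sum.cong refl sum.swap)
    finally show ?thesis by (simp only: sum_distrib_left[symmetric])
  qed
  also have "\<dots> = ?c^2 * (\<Sum>y\<in>F. of_nat (CARD('a)^CARD('n)))"
  proof -
    have "(\<Sum>y'\<in>F. \<Sum>m\<in>UNIV. \<psi> (dotp m (y' - y))) = of_nat (CARD('a)^CARD('n))" if y: "y \<in> F" for y :: "'a^'n"
    proof -
      have "(\<Sum>y'\<in>F. \<Sum>m\<in>UNIV. \<psi> (dotp m (y' - y))) = (\<Sum>y'\<in>F. if y' = y then of_nat (CARD('a)^CARD('n)) else 0)"
        by (intro sum.cong refl) (simp add: orthN[OF nt])
      also have "\<dots> = of_nat (CARD('a)^CARD('n))" using y by (simp add: sum.delta)
      finally show ?thesis .
    qed
    thus ?thesis by simp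
  qed
  also have "\<dots> = complex_of_real (real (card F) / real (CARD('a)^CARD('n)))"
    by (simp add: power2_eq_square)
  finally show ?thesis by (simp only: of_real_eq_iff)
qed

lemma counting: fixes \<psi> :: "'a::{field,finite} \<Rightarrow> complex" and g :: "'b \<Rightarrow> 'a"
  assumes nt: "nontrivial_add_char \<psi>" and P: "finite P"
  shows "real CARD('a) * (\<Sum>t\<in>UNIV. (\<Sum>p\<in>P. if g p = t then 1 else 0)^2)
       = (\<Sum>s\<in>UNIV. (cmod (\<Sum>p\<in>P. \<psi> (s * g p)))^2)"
proof -
  have ac: "add_char \<psi>" using nt unfolding nontrivial_add_char_def by auto
  have L: "(\<Sum>t\<in>UNIV. (\<Sum>p\<in>P. if g p = t then 1 else 0)^2) = (\<Sum>p\<in>P. \<Sum>p'\<in>P. if g p = g p' then 1 else (0::real))"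
  proof -
    have "(\<Sum>t\<in>UNIV. (\<Sum>p\<in>P. if g p = t then 1 else 0)^2)
       = (\<Sum>t\<in>UNIV. \<Sum>p\<in>P. \<Sum>p'\<in>P. (if g p' = t then 1 else (0::real)) * (if g p = t then 1 else 0))"
      by (simp add: power2_eq_square sum_distrib_left sum_distrib_right)
    also have "\<dots> = (\<Sum>p\<in>P. \<Sum>p'\<in>P. \<Sum>t\<in>UNIV. (if g p' = t then 1 else (0::real)) * (if g p = t then 1 else 0))"
    proof -
      have "(\<Sum>t\<in>UNIV. \<Sum>p\<in>P. \<Sum>p'\<in>P. (if g p' = t then 1 else (0::real)) * (if g p = t then 1 else 0))
          = (\<Sum>p\<in>P. \<Sum>t\<in>UNIV. \<Sum>p'\<in>P. (if g p' = t then 1 else (0::real)) * (if g p = t then 1 else 0))"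
        by (rule sum.swap)
      also have "\<dots> = (\<Sum>p\<in>P. \<Sum>p'\<in>P. \<Sum>t\<in>UNIV. (if g p' = t then 1 else (0::real)) * (if g p = t then 1 else 0))"
        by (intro sum.cong refl sum.swap)
      finally show ?thesis .
    qed
    also have "\<dots> = (\<Sum>p\<in>P. \<Sum>p'\<in>P. if g p = g p' then 1 else (0::real))"
    proof (intro sum.cong refl)
      fix p p'
      have "(\<Sum>t\<in>UNIV. (if g p' = t then 1 else (0::real)) * (if g p = t then 1 else 0))
          = (\<Sum>t\<in>UNIV. if g p' = t then (if g p = g p' then 1 else 0) else (0::real))"
        by (intro sum.cong refl) auto
      also have "\<dots> = (if g p = g p' then 1 else 0)" by (simp add: sum.delta eq_commute)
      finally show "(\<Sum>t\<in>UNIV. (if g p' = t then 1 else (0::real)) * (if g p = t then 1 else 0)) = (if g p = g p' then 1 else 0)" .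
    qed
    finally show ?thesis .
  qed
  have "complex_of_real (\<Sum>s\<in>UNIV. (cmod (\<Sum>p\<in>P. \<psi> (s * g p)))^2)
     = (\<Sum>s\<in>UNIV. (\<Sum>p\<in>P. \<psi> (s * g p)) * cnj (\<Sum>p\<in>P. \<psi> (s * g p)))"
    by (simp only: of_real_sum complex_norm_square)
  also have "\<dots> = (\<Sum>s\<in>UNIV. \<Sum>p\<in>P. \<Sum>p'\<in>P. \<psi> (s * (g p - g p')))"
  proof (intro sum.cong refl)
    fix s
    have "(\<Sum>p\<in>P. \<psi> (s * g p)) * cnj (\<Sum>p\<in>P. \<psi> (s * g p)) = (\<Sum>p\<in>P. \<Sum>p'\<in>P. \<psi> (s * g p) * \<psi> (- (s * g p')))"
      by (simp add: sum_distrib_left sum_distrib_right chr_cnj[OF ac]) (rule sum.swap)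
    also have "\<dots> = (\<Sum>p\<in>P. \<Sum>p'\<in>P. \<psi> (s * (g p - g p')))"
    proof -
      have "\<psi> (s * g p) * \<psi> (- (s * g p')) = \<psi> (s * (g p - g p'))" for p p'
      proof -
        have "s * (g p - g p') = s * g p + - (s * g p')" by (simp add: algebra_simps)
        thus ?thesis by (simp only: chr_add[OF ac])
      qed
      thus ?thesis by simp
    qed
    finally show "(\<Sum>p\<in>P. \<psi> (s * g p)) * cnj (\<Sum>p\<in>P. \<psi> (s * g p)) = (\<Sum>p\<in>P. \<Sum>p'\<in>P. \<psi> (s * (g p - g p')))" .
  qed
  also have "\<dots> = (\<Sum>p\<in>P. \<Sum>p'\<in>P. \<Sum>s\<in>UNIV. \<psi> (s * (g p - g p')))"
  proof -
    have "(\<Sum>s\<in>UNIV. \<Sum>p\<in>P. \<Sum>p'\<in>P. \<psi> (s * (g p - g p'))) = (\<Sum>p\<in>P. \<Sum>s\<in>UNIV. \<Sum>p'\<in>P. \<psi> (s * (g p - g p')))"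
      by (rule sum.swap)
    also have "\<dots> = (\<Sum>p\<in>P. \<Sum>p'\<in>P. \<Sum>s\<in>UNIV. \<psi> (s * (g p - g p')))"
      by (intro sum.cong refl sum.swap)
    finally show ?thesis .
  qed
  also have "\<dots> = (\<Sum>p\<in>P. \<Sum>p'\<in>P. complex_of_real (real CARD('a) * (if g p = g p' then 1 else 0)))"
    by (intro sum.cong refl) (simp add: orth1[OF nt])
  also have "\<dots> = complex_of_real (real CARD('a) * (\<Sum>p\<in>P. \<Sum>p'\<in>P. if g p = g p' then 1 else 0))"
    by (simp only: of_real_sum sum_distrib_left)
  finally show ?thesis unfolding L by (simp only: of_real_eq_iff)
qed

definition BB :: "('a::{field,finite} \<Rightarrow> complex) \<Rightarrow> ('a^'n) set \<Rightarrow> ('a^'n) set \<Rightarrow> 'a \<Rightarrow> complex" where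
  "BB \<psi> E F r = (\<Sum>m\<in>sphere_F r. fourier \<psi> (indic E) m * cnj (fourier \<psi> (indic F) m))"

lemma core: fixes \<psi> :: "'a::{field,finite} \<Rightarrow> complex" and E F :: "('a^'n) set"
  assumes nt: "nontrivial_add_char \<psi>" and two: "(2::'a) \<noteq> 0"
  shows "(\<Sum>t\<in>UNIV. (real (nu E F t))^2) \<le> real (card E)^2 * real (card F)^2 / real CARD('a)
     + real (CARD('a)^CARD('n))^3 * (\<Sum>r\<in>UNIV. (cmod (BB \<psi> E F r))^2)"
proof -
  have ac: "add_char \<psi>" using nt unfolding nontrivial_add_char_def by auto
  have f4: "(4::'a) \<noteq> 0" using two by (metis mult_2 mult_eq_0_iff numeral_Bit0)
  define q where "q = real CARD('a)"
  have q: "q > 0" unfolding q_def by simp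
  define R where "R = real (CARD('a)^CARD('n))"
  define P where "P = E \<times> F"
  define g where "g = (\<lambda>p::('a^'n) \<times> ('a^'n). qnorm (fst p - snd p))"
  have fP: "finite P" by simp
  have nu_eq: "real (nu E F t) = (\<Sum>p\<in>P. if g p = t then 1 else 0)" for t
  proof -
    have "{(x, y). x \<in> E \<and> y \<in> F \<and> qnorm (x - y) = t} = {p \<in> P. g p = t}"
      unfolding P_def g_def by auto
    hence "real (nu E F t) = real (card {p \<in> P. g p = t})" unfolding nu_def by simp
    also have "\<dots> = (\<Sum>p\<in>{p \<in> P. g p = t}. 1)" by simp
    also have "\<dots> = (\<Sum>p\<in>P. if g p = t then 1 else 0)" by (rule sum.inter_filter[OF fP])
    finally show ?thesis .
  qed
  have T_eq: "TT \<psi> E F s = (\<Sum>p\<in>P. \<psi> (s * g p))" for s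
    unfolding TT_def P_def g_def by (simp add: sum.cartesian_product case_prod_beta)
  define N where "N = (\<Sum>t\<in>UNIV. (real (nu E F t))^2)"
  have qN: "q * N = (\<Sum>s\<in>UNIV. (cmod (TT \<psi> E F s))^2)"
    unfolding N_def nu_eq T_eq q_def by (rule counting[OF nt fP])
  have T0: "TT \<psi> E F 0 = of_nat (card E * card F)"
    unfolding TT_def using chr0[OF ac] by simp
  have split: "(\<Sum>s\<in>UNIV. (cmod (TT \<psi> E F s))^2) = (cmod (TT \<psi> E F 0))^2 + (\<Sum>s\<in>UNIV - {0}. (cmod (TT \<psi> E F s))^2)"
    by (rule sum.remove) auto
  have "(\<Sum>s\<in>UNIV - {0}. (cmod (TT \<psi> E F s))^2) = (\<Sum>b\<in>UNIV - {0}. (cmod (TT \<psi> E F (- 1 / (4 * b))))^2)"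
    by (rule sum.reindex_bij_witness[of _ "\<lambda>b. - 1 / (4 * b)" "\<lambda>b. - 1 / (4 * b)"]) (use f4 in auto)
  also have "\<dots> = (\<Sum>b\<in>UNIV - {0}. R^3 * (cmod (\<Sum>r\<in>UNIV. \<psi> (b * r) * BB \<psi> E F r))^2)"
  proof (intro sum.cong refl)
    fix b :: 'a assume "b \<in> UNIV - {0}"
    hence b: "b \<noteq> 0" by simp
    show "(cmod (TT \<psi> E F (- 1 / (4 * b))))^2 = R^3 * (cmod (\<Sum>r\<in>UNIV. \<psi> (b * r) * BB \<psi> E F r))^2"
      unfolding T_norm[OF nt two b] R_def BB_def
      using group_r[of "\<lambda>m. fourier \<psi> (indic E) m * cnj (fourier \<psi> (indic F) m)" \<psi> b] by simp
  qed
  also have "\<dots> \<le> (\<Sum>b\<in>UNIV. R^3 * (cmod (\<Sum>r\<in>UNIV. \<psi> (b * r) * BB \<psi> E F r))^2)"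
    by (rule sum_mono2) (auto simp: R_def)
  also have "\<dots> = R^3 * (q * (\<Sum>r\<in>UNIV. (cmod (BB \<psi> E F r))^2))"
    unfolding sum_distrib_left[symmetric] L8[OF nt] q_def ..
  finally have "q * N \<le> real (card E)^2 * real (card F)^2 + q * (R^3 * (\<Sum>r\<in>UNIV. (cmod (BB \<psi> E F r))^2))"
    unfolding qN split T0 by (simp add: power_mult_distrib norm_mult mult_ac)
  hence "N \<le> (real (card E)^2 * real (card F)^2) / q + R^3 * (\<Sum>r\<in>UNIV. (cmod (BB \<psi> E F r))^2)"
    using q by (simp add: field_simps)
  thus ?thesis unfolding N_def q_def R_def .
qed

lemma cs_B: "(cmod (BB \<psi> E F r))^2 \<le> (\<Sum>m\<in>sphere_F r. (cmod (fourier \<psi> (indic E) m))^2) * (\<Sum>m\<in>sphere_F r. (cmod (fourier \<psi> (indic F) m))^2)"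
proof -
  have "cmod (BB \<psi> E F r) \<le> (\<Sum>m\<in>sphere_F r. cmod (fourier \<psi> (indic E) m) * cmod (fourier \<psi> (indic F) m))"
    unfolding BB_def by (rule order_trans[OF norm_sum]) (simp add: norm_mult)
  hence "(cmod (BB \<psi> E F r))^2 \<le> (\<Sum>m\<in>sphere_F r. cmod (fourier \<psi> (indic E) m) * cmod (fourier \<psi> (indic F) m))^2"
    by (rule power_mono) simp
  also have "\<dots> \<le> (\<Sum>m\<in>sphere_F r. (cmod (fourier \<psi> (indic E) m))^2) * (\<Sum>m\<in>sphere_F r. (cmod (fourier \<psi> (indic F) m))^2)"
    by (rule Cauchy_Schwarz_ineq_sum)
  finally show ?thesis .
qed

lemma sumY: fixes \<psi> :: "'a::{field,finite} \<Rightarrow> complex" and F :: "('a^'n) set"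
  assumes nt: "nontrivial_add_char \<psi>"
  shows "(\<Sum>r\<in>UNIV. \<Sum>m\<in>sphere_F r. (cmod (fourier \<psi> (indic F) m))^2) = real (card F) / real (CARD('a)^CARD('n))"
proof -
  have "(\<Sum>r\<in>UNIV. \<Sum>m\<in>sphere_F r. (cmod (fourier \<psi> (indic F) m))^2) = (\<Sum>m\<in>UNIV. (cmod (fourier \<psi> (indic F) m))^2)"
    unfolding sphere_F_def using sum.group[of "UNIV::('a^'n) set" "UNIV::'a set" qnorm "\<lambda>m. (cmod (fourier \<psi> (indic F) m))^2"]
    by simp
  thus ?thesis using plancherel[OF nt] by simp
qed

theorem mainTheorem7:
  fixes \<psi> :: "'a::{field,finite} \<Rightarrow> complex"
    and E F :: "('a ^ 'n) set"
  assumes "CHAR('a) > 2"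
    and "nontrivial_add_char \<psi>"
    and "CARD('n) \<ge> 2"
  shows "((\<Sum>t\<in>UNIV. (real (nu E F t))^2)
           \<le> real (card E)^2 * real (card F)^2 / real CARD('a)
             + real CARD('a) ^ (2 * CARD('n)) * real (card F) * frakM \<psi> E)
    \<and> ((\<Sum>t\<in>UNIV. (real (nu E F t))^2)
           \<le> real (card E)^2 * real (card F)^2 / real CARD('a)
             + real CARD('a) ^ (3 * CARD('n))
                 * (cmod (\<Sum>m\<in>sphere_F 0. cnj (fourier \<psi> (indic E) m) * fourier \<psi> (indic F) m))^2
             + real CARD('a) ^ (2 * CARD('n)) * real (card F) * frakM_star \<psi> E)"
proof -
  note nt = assms(2)
  have two: "(2::'a) \<noteq> 0" by (rule two_ne0[OF assms(1)])
  define R where "R = real (CARD('a)^CARD('n))"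
  have R: "R > 0" unfolding R_def by simp
  define X where "X = (\<lambda>r. \<Sum>m\<in>sphere_F r. (cmod (fourier \<psi> (indic E) m))^2)"
  define Y where "Y = (\<lambda>r::'a. \<Sum>m\<in>(sphere_F r :: ('a^'n) set). (cmod (fourier \<psi> (indic F) m))^2)"
  define S2 where "S2 = (\<Sum>r\<in>UNIV. (cmod (BB \<psi> E F r))^2)"
  define N where "N = (\<Sum>t\<in>UNIV. (real (nu E F t))^2)"
  define A where "A = real (card E)^2 * real (card F)^2 / real CARD('a)"
  have c: "N \<le> A + R^3 * S2" unfolding N_def A_def R_def S2_def by (rule core[OF nt two])
  have Xn: "X r \<ge> 0" for r unfolding X_def by (simp add: sum_nonneg)
  have Yn: "Y r \<ge> 0" for r unfolding Y_def by (simp add: sum_nonneg)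
  have B: "(cmod (BB \<psi> E F r))^2 \<le> X r * Y r" for r unfolding X_def Y_def by (rule cs_B)
  have SY: "(\<Sum>r\<in>UNIV. Y r) = real (card F) / R" unfolding Y_def R_def by (rule sumY[OF nt])
  have R2: "R^2 = real CARD('a) ^ (2 * CARD('n))" unfolding R_def
    by (simp add: power_mult[symmetric] mult.commute)
  have R3: "R^3 = real CARD('a) ^ (3 * CARD('n))" unfolding R_def
    by (simp add: power_mult[symmetric] mult.commute)
  have RR: "R^3 * (M * (real (card F) / R)) = R^2 * real (card F) * M" for M
    using R by (simp add: field_simps power2_eq_square power3_eq_cube)
  have XM: "X r \<le> frakM \<psi> E" for r
    unfolding frakM_def X_def by (rule Max_ge) auto
  have "S2 \<le> (\<Sum>r\<in>UNIV. frakM \<psi> E * Y r)"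
    unfolding S2_def by (rule sum_mono) (rule order_trans[OF B mult_right_mono[OF XM Yn]])
  also have "\<dots> = frakM \<psi> E * (real (card F) / R)" by (simp add: sum_distrib_left[symmetric] SY)
  finally have S2a: "S2 \<le> frakM \<psi> E * (real (card F) / R)" .
  have part1: "N \<le> A + R^2 * real (card F) * frakM \<psi> E"
  proof -
    have "R^3 * S2 \<le> R^3 * (frakM \<psi> E * (real (card F) / R))"
      using S2a R by (intro mult_left_mono) auto
    thus ?thesis using c RR[of "frakM \<psi> E"] by linarith
  qed
  have XMs: "X r \<le> frakM_star \<psi> E" if "r \<noteq> 0" for r
    unfolding frakM_star_def X_def by (rule Max_ge) (use that in auto)
  have Ms: "frakM_star \<psi> E \<ge> 0" using XMs[of 1] Xn[of 1] by simp
  have "S2 = (cmod (BB \<psi> E F 0))^2 + (\<Sum>r\<in>UNIV - {0}. (cmod (BB \<psi> E F r))^2)"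
    unfolding S2_def by (rule sum.remove) auto
  also have "(\<Sum>r\<in>UNIV - {0}. (cmod (BB \<psi> E F r))^2) \<le> (\<Sum>r\<in>UNIV - {0}. frakM_star \<psi> E * Y r)"
    by (rule sum_mono) (rule order_trans[OF B mult_right_mono[OF XMs Yn]], auto)
  also have "\<dots> \<le> (\<Sum>r\<in>UNIV. frakM_star \<psi> E * Y r)"
    by (rule sum_mono2) (auto intro: mult_nonneg_nonneg Ms Yn)
  also have "\<dots> = frakM_star \<psi> E * (real (card F) / R)" by (simp add: sum_distrib_left[symmetric] SY)
  finally have S2b: "S2 \<le> (cmod (BB \<psi> E F 0))^2 + frakM_star \<psi> E * (real (card F) / R)" by simp
  have B0: "cmod (BB \<psi> E F 0) = cmod (\<Sum>m\<in>sphere_F 0. cnj (fourier \<psi> (indic E) m) * fourier \<psi> (indic F) m)"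
  proof -
    have "BB \<psi> E F 0 = cnj (\<Sum>m\<in>sphere_F 0. cnj (fourier \<psi> (indic E) m) * fourier \<psi> (indic F) m)"
      unfolding BB_def by simp
    thus ?thesis by (simp only: complex_mod_cnj)
  qed
  have part2: "N \<le> A + R^3 * (cmod (BB \<psi> E F 0))^2 + R^2 * real (card F) * frakM_star \<psi> E"
  proof -
    have "R^3 * S2 \<le> R^3 * ((cmod (BB \<psi> E F 0))^2 + frakM_star \<psi> E * (real (card F) / R))"
      using S2b R by (intro mult_left_mono) auto
    thus ?thesis using c RR[of "frakM_star \<psi> E"] by (simp add: distrib_left)
  qed
  show ?thesis using part1 part2 unfolding N_def A_def R2 R3 B0 by simp
qed

end
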